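(* Let $x\in\mathrm{Cay}_n$. (1) If $y\in\mathrm{Cay}_k$ and $y\le x$, then $\gamma(y)\le\gamma(x)$. (2) If $\sigma\in\mathcal{S}_k$ and $\sigma\le\gamma(x)$, then there exists $y\in\mathrm{Cay}_k$ such that $y\le x$ and $\gamma(y)=\sigma$.
   Context: $\mathrm{Cay}_n$ is the set of Cayley permutations of length $n$ (words of positive integers in which every integer from $1$ to the maximum occurs); $\mathcal{S}_k$ is the set of permutations of $[k]$. Containment $y\le x$: indices $i_1<\dots<i_k$ with $x(i_s)<x(i_t)\iff y(s)<y(t)$ and $x(i_s)=x(i_t)\iff y(s)=y(t)$. For $x\in\mathrm{Cay}_n$, $\gamma(x)\in\mathcal{S}_n$ is obtained by sorting the pairs $(x(i),i)$ increasingly by first coordinate, ties by decreasing second coordinate, and reading the second coordinates. *)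

theory Defs
  imports Main "HOL-Library.Product_Lexorder"
begin

text \<open>Words are lists of natural numbers; positions are 1-based in the paper,
  0-based for list indexing (x ! (i-1) is x(i)).\<close>

definition Cay :: "nat \<Rightarrow> nat list set" where
  "Cay n = {x. length x = n \<and> (\<exists>m. set x = {1..m})}"

definition Perms :: "nat \<Rightarrow> nat list set" where
  "Perms k = {s. length s = k \<and> distinct s \<and> set s = {1..k}}"

definition pat_le :: "nat list \<Rightarrow> nat list \<Rightarrow> bool" where
  "pat_le y x \<longleftrightarrow> (\<exists>idx :: nat list.
      length idx = length y \<and> sorted_wrt (<) idx \<and> (\<forall>j\<in>set idx. j < length x) \<and>
      (\<forall>s<length y. \<forall>t<length y.
          (x ! (idx ! s) < x ! (idx ! t) \<longleftrightarrow> y ! s < y ! t) \<and>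
          (x ! (idx ! s) = x ! (idx ! t) \<longleftrightarrow> y ! s = y ! t)))"

text \<open>gamma: sort the pairs (x(i), i) increasingly by first coordinate, ties by
  decreasing second coordinate, and read off the second coordinates.\<close>
definition gamma :: "nat list \<Rightarrow> nat list" where
  "gamma x = sort_key (\<lambda>i. (x ! (i - 1), - int i)) [1..<length x + 1]"

end

theory Submission
  imports Defs "HOL-Library.Multiset"
begin

definition keyf :: "nat list \<Rightarrow> nat \<Rightarrow> nat \<times> int" where
  "keyf w = (\<lambda>i. (w ! (i - 1), - int i))"

lemma gamma_eq: "gamma w = sort_key (keyf w) [1..<length w + 1]"
  by (simp add: gamma_def keyf_def)

lemma gamma_len: "length (gamma w) = length w"
  unfolding gamma_eq length_sort length_upt by simp

lemma gamma_set: "set (gamma w) = {1..length w}"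
  by (auto simp: gamma_eq)

lemma gamma_distinct: "distinct (gamma w)"
  by (simp add: gamma_eq)

lemma keyf_inj: "inj (keyf w)"
  by (auto simp: inj_def keyf_def)

lemma gamma_strict: "sorted_wrt (<) (map (keyf w) (gamma w))"
proof -
  have "sorted (map (keyf w) (gamma w))" by (simp add: gamma_eq)
  moreover have "distinct (map (keyf w) (gamma w))"
    by (simp add: distinct_map gamma_distinct inj_on_subset[OF keyf_inj])
  ultimately show ?thesis by (simp add: strict_sorted_iff)
qed

lemma gamma_mono:
  assumes "a < length w" "b < length w"
  shows "a < b \<longleftrightarrow> keyf w (gamma w ! a) < keyf w (gamma w ! b)"
proof -
  have A: "\<And>a b. a < b \<Longrightarrow> b < length w \<Longrightarrow> keyf w (gamma w ! a) < keyf w (gamma w ! b)"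
    using gamma_strict[of w] by (simp add: sorted_wrt_iff_nth_less gamma_len)
  show ?thesis using A[of a b] A[of b a] assms
    by (metis less_asym linorder_cases less_irrefl)
qed

lemma idx_mono:
  fixes idx :: "nat list"
  assumes "sorted_wrt (<) idx" "s < length idx" "t < length idx"
  shows "idx ! s < idx ! t \<longleftrightarrow> s < t"
proof
  assume "idx ! s < idx ! t"
  show "s < t"
  proof (rule ccontr)
    assume "\<not> s < t"
    then have "t < s \<or> t = s" by auto
    then show False
    proof
      assume "t < s"
      then have "idx ! t < idx ! s" using assms sorted_wrt_nth_less by blast
      then show False using \<open>idx ! s < idx ! t\<close> by simp
    next
      assume "t = s" then show False using \<open>idx ! s < idx ! t\<close> by simp
    qed
  qed
next
  assume "s < t"
  then show "idx ! s < idx ! t" using assms sorted_wrt_nth_less by blast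
qed

lemma key_pres:
  fixes idx :: "nat list"
  assumes "length idx = length y" "sorted_wrt (<) idx"
    "\<forall>s<length y. \<forall>t<length y. (x!(idx!s) < x!(idx!t) \<longleftrightarrow> y!s < y!t) \<and> (x!(idx!s) = x!(idx!t) \<longleftrightarrow> y!s = y!t)"
    "s < length y" "t < length y"
  shows "keyf y (Suc s) < keyf y (Suc t) \<longleftrightarrow> keyf x (Suc (idx!s)) < keyf x (Suc (idx!t))"
proof -
  have m: "idx ! s < idx ! t \<longleftrightarrow> s < t" using idx_mono[OF assms(2)] assms by simp
  have m2: "idx ! t < idx ! s \<longleftrightarrow> t < s" using idx_mono[OF assms(2)] assms by simp
  have "x!(idx!s) < x!(idx!t) \<longleftrightarrow> y!s < y!t" "x!(idx!s) = x!(idx!t) \<longleftrightarrow> y!s = y!t"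
    using assms by auto
  then show ?thesis using m m2 by (auto simp: keyf_def le_less)
qed

lemma part1:
  assumes "pat_le y x"
  shows "pat_le (gamma y) (gamma x)"
proof -
  obtain idx where L: "length idx = length y" and S: "sorted_wrt (<) idx"
    and B: "\<forall>j\<in>set idx. j < length x"
    and I: "\<forall>s<length y. \<forall>t<length y. (x!(idx!s) < x!(idx!t) \<longleftrightarrow> y!s < y!t) \<and> (x!(idx!s) = x!(idx!t) \<longleftrightarrow> y!s = y!t)"
    using assms unfolding pat_le_def by blast
  define F where "F q = Suc (idx ! (q - 1))" for q
  have ex: "\<forall>q\<in>set (gamma y). \<exists>j<length x. gamma x ! j = F q"
  proof
    fix q assume "q \<in> set (gamma y)"
    then have q: "q - 1 < length y" "q \<ge> 1" by (auto simp: gamma_set)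
    then have "idx ! (q - 1) < length x" using B L by auto
    then have "F q \<in> set (gamma x)" by (simp add: F_def gamma_set)
    then show "\<exists>j<length x. gamma x ! j = F q" by (metis in_set_conv_nth gamma_len)
  qed
  obtain r where r: "\<forall>q\<in>set (gamma y). r q < length x \<and> gamma x ! (r q) = F q"
    using bchoice[OF ex] by blast
  have Fk: "keyf y q < keyf y q' \<longleftrightarrow> keyf x (F q) < keyf x (F q')"
    if "q \<in> set (gamma y)" "q' \<in> set (gamma y)" for q q'
  proof -
    have "q - 1 < length y" "q \<ge> 1" "q' - 1 < length y" "q' \<ge> 1" using that by (auto simp: gamma_set)
    then show ?thesis using key_pres[OF L S I, of "q - 1" "q' - 1"] by (simp add: F_def)
  qed
  have Fm: "F q < F q' \<longleftrightarrow> q < q'" "F q = F q' \<longleftrightarrow> q = q'"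
    if "q \<in> set (gamma y)" "q' \<in> set (gamma y)" for q q'
  proof -
    have "q - 1 < length y" "q \<ge> 1" "q' - 1 < length y" "q' \<ge> 1" using that by (auto simp: gamma_set)
    moreover have m1: "idx ! (q - 1) < idx ! (q' - 1) \<longleftrightarrow> q - 1 < q' - 1"
      using idx_mono[OF S, of "q - 1" "q' - 1"] L calculation by simp
    moreover have m2: "idx ! (q' - 1) < idx ! (q - 1) \<longleftrightarrow> q' - 1 < q - 1"
      using idx_mono[OF S, of "q' - 1" "q - 1"] L calculation by simp
    ultimately show "F q < F q' \<longleftrightarrow> q < q'" "F q = F q' \<longleftrightarrow> q = q'"
      unfolding F_def by (auto simp del: nat_less_le)
  qed
  show ?thesis unfolding pat_le_def
  proof (intro exI conjI)
    show "length (map r (gamma y)) = length (gamma y)" by simp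
    show "\<forall>j\<in>set (map r (gamma y)). j < length (gamma x)" using r by (auto simp: gamma_len)
    show "sorted_wrt (<) (map r (gamma y))"
      unfolding sorted_wrt_iff_nth_less
    proof (intro allI impI)
      fix a b assume ab: "a < b" "b < length (map r (gamma y))"
      then have ab': "a < length y" "b < length y" by (auto simp: gamma_len)
      have m1: "gamma y ! a \<in> set (gamma y)" "gamma y ! b \<in> set (gamma y)"
        using ab' by (auto simp: gamma_len)
      have "keyf y (gamma y ! a) < keyf y (gamma y ! b)" using gamma_mono[OF ab'] ab by simp
      then have "keyf x (gamma x ! r (gamma y ! a)) < keyf x (gamma x ! r (gamma y ! b))"
        using Fk[OF m1] r m1 by simp
      then have "r (gamma y ! a) < r (gamma y ! b)" using gamma_mono r m1 by blast
      then show "map r (gamma y) ! a < map r (gamma y) ! b" using ab' by (simp add: gamma_len)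
    qed
    show "\<forall>s<length (gamma y). \<forall>t<length (gamma y).
      (gamma x ! (map r (gamma y) ! s) < gamma x ! (map r (gamma y) ! t) \<longleftrightarrow> gamma y ! s < gamma y ! t) \<and>
      (gamma x ! (map r (gamma y) ! s) = gamma x ! (map r (gamma y) ! t) \<longleftrightarrow> gamma y ! s = gamma y ! t)"
    proof (intro allI impI)
      fix s t assume st: "s < length (gamma y)" "t < length (gamma y)"
      then have m1: "gamma y ! s \<in> set (gamma y)" "gamma y ! t \<in> set (gamma y)" by auto
      show "(gamma x ! (map r (gamma y) ! s) < gamma x ! (map r (gamma y) ! t) \<longleftrightarrow> gamma y ! s < gamma y ! t) \<and>
      (gamma x ! (map r (gamma y) ! s) = gamma x ! (map r (gamma y) ! t) \<longleftrightarrow> gamma y ! s = gamma y ! t)"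
        using st m1 r Fm[OF m1] by simp
    qed
  qed
qed

lemma part2:
  assumes P: "\<sigma> \<in> Perms k" and pl: "pat_le \<sigma> (gamma x)"
  shows "\<exists>y \<in> Cay k. pat_le y x \<and> gamma y = \<sigma>"
proof -
  have sl: "length \<sigma> = k" and sd: "distinct \<sigma>" and ss: "set \<sigma> = {1..k}"
    using P by (auto simp: Perms_def)
  obtain idx where L: "length idx = k" and S: "sorted_wrt (<) idx"
    and B: "\<forall>j\<in>set idx. j < length x"
    and I: "\<forall>s<k. \<forall>t<k. (gamma x!(idx!s) < gamma x!(idx!t) \<longleftrightarrow> \<sigma>!s < \<sigma>!t)"
    using pl sl unfolding pat_le_def by (auto simp: gamma_len)
  define P where "P j = gamma x ! (idx ! j)" for j
  have Pr: "P j \<ge> 1 \<and> P j \<le> length x" if "j < k" for j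
  proof -
    have "idx ! j < length x" using B L that by auto
    then have "P j \<in> set (gamma x)" by (simp add: P_def gamma_len)
    then show ?thesis by (simp add: gamma_set)
  qed
  have keyP: "keyf x (P j) < keyf x (P j')" if "j < j'" "j' < k" for j j'
  proof -
    have "idx ! j < idx ! j'" using S L that by (simp add: sorted_wrt_nth_less)
    moreover have "idx ! j' < length x" "idx ! j < length x" using B L that by auto
    ultimately show ?thesis using gamma_mono by (simp add: P_def)
  qed
  have PI: "P s < P t \<longleftrightarrow> \<sigma>!s < \<sigma>!t" if "s < k" "t < k" for s t
    using I that by (simp add: P_def)
  have exg: "\<forall>i<k. \<exists>j<k. \<sigma>!j = Suc i"
  proof (intro allI impI)
    fix i assume "i < k"
    then have "Suc i \<in> set \<sigma>" using ss by auto
    then show "\<exists>j<k. \<sigma>!j = Suc i" by (metis in_set_conv_nth sl)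
  qed
  obtain g where g: "\<forall>i<k. g i < k \<and> \<sigma>!(g i) = Suc i"
    using exg by metis
  have sr: "\<sigma>!j \<ge> 1 \<and> \<sigma>!j \<le> k" if "j < k" for j
    using nth_mem[of j \<sigma>] that sl ss by auto
  have gs: "g (\<sigma>!j - 1) = j" if "j < k" for j
  proof -
    have "\<sigma>!j - 1 < k" using sr[OF that] by auto
    then have "g (\<sigma>!j - 1) < k" "\<sigma>!(g (\<sigma>!j - 1)) = \<sigma>!j" using g sr[OF that] by auto
    then show ?thesis using sd sl that by (simp add: nth_eq_iff_index_eq)
  qed
  define f where "f = map (\<lambda>i. P (g i) - 1) [0..<k]"
  have fl: "length f = k" by (simp add: f_def)
  have fn: "f ! i = P (g i) - 1" if "i < k" for i using that by (simp add: f_def)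
  have fS: "sorted_wrt (<) f"
    unfolding sorted_wrt_iff_nth_less
  proof (intro allI impI)
    fix i i' assume "i < i'" "i' < length f"
    then have ii: "i < k" "i' < k" "i < i'" using fl by auto
    then have "\<sigma>!(g i) < \<sigma>!(g i')" using g by auto
    then have "P (g i) < P (g i')" using PI g ii by auto
    then show "f ! i < f ! i'" using fn ii Pr g by (metis diff_less_mono)
  qed
  have fB: "\<forall>j\<in>set f. j < length x"
  proof
    fix j assume "j \<in> set f"
    then obtain i where "i < k" "j = P (g i) - 1" by (auto simp: f_def)
    then show "j < length x" using Pr g by (metis diff_less less_le_trans zero_less_one)
  qed
  define V where "V = (\<lambda>i. x ! (f ! i)) ` {..<k}"
  have Vf: "finite V" by (simp add: V_def)
  define rank where "rank v = Suc (card {u\<in>V. u < v})" for v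
  have rmono: "rank u < rank v" if "u \<in> V" "u < v" for u v
  proof -
    have "{w\<in>V. w < u} \<subset> {w\<in>V. w < v}" using that by auto
    then show ?thesis using Vf by (simp add: rank_def psubset_card_mono)
  qed
  have riff: "(rank u < rank v \<longleftrightarrow> u < v) \<and> (rank u = rank v \<longleftrightarrow> u = v)"
    if "u \<in> V" "v \<in> V" for u v
    using rmono[OF that(1)] rmono[OF that(2)] by (metis less_asym linorder_cases less_irrefl)
  define y where "y = map (\<lambda>i. rank (x ! (f ! i))) [0..<k]"
  have yl: "length y = k" by (simp add: y_def)
  have yI: "\<forall>s<length y. \<forall>t<length y. (x!(f!s) < x!(f!t) \<longleftrightarrow> y!s < y!t) \<and> (x!(f!s) = x!(f!t) \<longleftrightarrow> y!s = y!t)"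
  proof (intro allI impI)
    fix s t assume "s < length y" "t < length y"
    then have st: "s < k" "t < k" using yl by auto
    then have "x!(f!s) \<in> V" "x!(f!t) \<in> V" by (auto simp: V_def)
    then show "(x!(f!s) < x!(f!t) \<longleftrightarrow> y!s < y!t) \<and> (x!(f!s) = x!(f!t) \<longleftrightarrow> y!s = y!t)"
      using riff st by (simp add: y_def)
  qed
  have ple: "pat_le y x" unfolding pat_le_def
  proof (intro exI[of _ f] conjI)
    show "length f = length y" using fl yl by simp
  qed (fact fS, fact fB, fact yI)
  have yset: "set y = rank ` V" by (auto simp: y_def V_def)
  have rV: "rank ` V = {1..card V}"
  proof -
    have sub: "rank ` V \<subseteq> {1..card V}"
    proof
      fix r assume "r \<in> rank ` V"
      then obtain v where v: "v \<in> V" "r = rank v" by auto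
      have "{u\<in>V. u < v} \<subset> V" using v by auto
      then have "card {u\<in>V. u < v} < card V" using Vf by (simp add: psubset_card_mono)
      then show "r \<in> {1..card V}" using v by (simp add: rank_def)
    qed
    have "inj_on rank V" using riff by (auto simp: inj_on_def)
    then have "card (rank ` V) = card {1..card V}" by (simp add: card_image)
    then show ?thesis using sub by (simp add: card_subset_eq)
  qed
  have ys2: "set y = {1..card V}" using yset rV by (rule trans)
  have yC: "y \<in> Cay k" unfolding Cay_def mem_Collect_eq
  proof (intro conjI exI[of _ "card V"])
    show "length y = k" by (rule yl)
    show "set y = {1..card V}" by (rule ys2)
  qed
  have gy: "gamma y = \<sigma>"
    unfolding gamma_eq
  proof (rule sort_key_inj_key_eq)
    have "set [1..<length y + 1] = {1..<k + 1}" by (simp only: yl set_upt)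
    also have "\<dots> = {1..k}" by auto
    finally have "set [1..<length y + 1] = set \<sigma>" using ss by simp
    then show "mset [1..<length y + 1] = mset \<sigma>"
      by (rule iffD1[OF set_eq_iff_mset_eq_distinct[OF distinct_upt sd]])
    show "inj_on (keyf y) (set [1..<length y + 1])" by (rule inj_on_subset[OF keyf_inj subset_UNIV])
    show "sorted (map (keyf y) \<sigma>)"
      unfolding sorted_iff_nth_mono_less
    proof (intro allI impI)
      fix j j' assume jj: "j < j'" "j' < length (map (keyf y) \<sigma>)"
      then have jk: "j < k" "j' < k" using sl by auto
      define s where "s = \<sigma>!j - 1"
      define t where "t = \<sigma>!j' - 1"
      have b1: "\<sigma>!j \<ge> 1" "\<sigma>!j \<le> k" using sr[of j] jk(1) by blast+
      have b2: "\<sigma>!j' \<ge> 1" "\<sigma>!j' \<le> k" using sr[of j'] jk(2) by blast+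
      have st: "s < k" "t < k" "\<sigma>!j = Suc s" "\<sigma>!j' = Suc t"
        unfolding s_def t_def using b1 b2 by linarith+
      have p1: "P j \<ge> 1" using Pr jk(1) by blast
      have p2: "P j' \<ge> 1" using Pr jk(2) by blast
      have e1: "f ! s = P j - 1" using fn[OF st(1)] gs[OF jk(1)] by (simp add: s_def)
      have e2: "f ! t = P j' - 1" using fn[OF st(2)] gs[OF jk(2)] by (simp add: t_def)
      have "Suc (f ! s) = P j" using e1 p1 by linarith
      moreover have "Suc (f ! t) = P j'" using e2 p2 by linarith
      ultimately have "keyf y (Suc s) < keyf y (Suc t)"
        using key_pres[OF fl[folded yl] fS yI, of s t] st yl keyP[OF jj(1) jk(2)] by simp
      then show "map (keyf y) \<sigma> ! j \<le> map (keyf y) \<sigma> ! j'" using st jk sl by simp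
    qed
  qed
  show ?thesis using yC ple gy by blast
qed

theorem corollary4p7:
  fixes x :: "nat list" and n :: nat
  assumes "x \<in> Cay n"
  shows "(\<forall>k y. y \<in> Cay k \<and> pat_le y x \<longrightarrow> pat_le (gamma y) (gamma x)) \<and>
         (\<forall>k \<sigma>. \<sigma> \<in> Perms k \<and> pat_le \<sigma> (gamma x) \<longrightarrow>
             (\<exists>y \<in> Cay k. pat_le y x \<and> gamma y = \<sigma>))"
  using part1 part2 by blast

end
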